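(* Let $(\Omega,\mathcal{F},(\mathcal{F}_t)_{t\in[0,T]})$ be a filtered space with a probability measure $Q$, let $\rho:[0,T]\to\mathbb{R}$ be a deterministic interest rate, and let $S_t^0=\exp\left(\int_0^t\rho(u)\,du\right)$ be the bond. Let $S_t^1>0$ be an asset whose discounted price $X_t^1=S_t^1/S_t^0$ is a strictly positive $Q$-martingale. For $t\in[0,T]$ let $Q_1'(t)$ be the probability measure with $Q_1'(t)\ll Q$ and $\frac{dQ_1'(t)}{dQ}=\frac{X_T^1}{X_t^1}$. For a strike $K>0$, put $c_t=K\exp\left(-\int_t^T\rho(u)\,du\right)$ and, for $x>0$, let $$\Phi_t\left(\tfrac{dQ_1'(t)}{dQ},x\right)=\mathbf{1}\left\{\tfrac{dQ_1'(t)}{dQ}>\tfrac{c_t}{x}\right\},$$ and let the $Q$-price at time $t$ of the European call $H_C$ with strike $K$, given $S_t^1=x$, be $$p_Q(H_C,x,t)=x\,E_{Q_1'(t)}\left(\Phi_t\left(\tfrac{dQ_1'(t)}{dQ},x\right)\right)-\exp\left(-\int_t^T\rho(u)\,du\right)K\,E_Q\left(\Phi_t\left(\tfrac{dQ_1'(t)}{dQ},x\right)\right).$$ Suppose that for all $t$ the distribution $\mathcal{L}\left(\frac{dQ_1'(t)}{dQ}\,\Big|\,Q\right)$ has a continuous Lebesgue density on $(0,\infty)$. Then for every $s_t^1>0$, $$\frac{d}{dx}p_Q(H_C,x,t)\Big|_{x=s_t^1}=E_{Q_1'(t)}\left(\Phi_t\left(\tfrac{dQ_1'(t)}{dQ},s_t^1\right)\right),$$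 i.e. the ``delta'' of the price process equals the $Q_1'(t)$-power of the test $\Phi_t$.
   Context: The displayed formula for $p_Q(H_C,x,t)$ is the representation of the $Q$-price process of the European call $H_C$ (payoff $(S_T^1-K)^+$) at time $t$ given $S_t^1=x$; $\Phi_t$ is viewed as a statistical (Neyman–Pearson) test of the null hypothesis $\{Q\}$ against the alternative $\{Q_1'(t)\}$, and $E_{Q_1'(t)}(\Phi_t)$ is its power. *)

theory Defs
  imports "HOL-Probability.Probability"
begin

definition martingale_on :: "'a measure \<Rightarrow> (real \<Rightarrow> 'a measure) \<Rightarrow> real \<Rightarrow> (real \<Rightarrow> 'a \<Rightarrow> real) \<Rightarrow> bool" where
  "martingale_on M F T X \<longleftrightarrow>
     (\<forall>t\<in>{0..T}. subalgebra M (F t) \<and> X t \<in> borel_measurable (F t) \<and> integrable M (X t)) \<and>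
     (\<forall>s t. 0 \<le> s \<longrightarrow> s \<le> t \<longrightarrow> t \<le> T \<longrightarrow>
        (AE \<omega> in M. real_cond_exp M (F s) (X t) \<omega> = X s \<omega>))"

definition bond :: "(real \<Rightarrow> real) \<Rightarrow> real \<Rightarrow> real" where
  "bond \<rho> t = exp (integral {0..t} \<rho>)"

definition discounted :: "(real \<Rightarrow> real) \<Rightarrow> (real \<Rightarrow> 'a \<Rightarrow> real) \<Rightarrow> real \<Rightarrow> 'a \<Rightarrow> real" where
  "discounted \<rho> S1 t \<omega> = S1 t \<omega> / bond \<rho> t"

definition dens_Q1' :: "(real \<Rightarrow> real) \<Rightarrow> (real \<Rightarrow> 'a \<Rightarrow> real) \<Rightarrow> real \<Rightarrow> real \<Rightarrow> 'a \<Rightarrow> real" where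
  "dens_Q1' \<rho> S1 T t \<omega> = discounted \<rho> S1 T \<omega> / discounted \<rho> S1 t \<omega>"

definition Q1' :: "'a measure \<Rightarrow> (real \<Rightarrow> real) \<Rightarrow> (real \<Rightarrow> 'a \<Rightarrow> real) \<Rightarrow> real \<Rightarrow> real \<Rightarrow> 'a measure" where
  "Q1' Q \<rho> S1 T t = density Q (\<lambda>\<omega>. ennreal (dens_Q1' \<rho> S1 T t \<omega>))"

definition c_strike :: "(real \<Rightarrow> real) \<Rightarrow> real \<Rightarrow> real \<Rightarrow> real \<Rightarrow> real" where
  "c_strike \<rho> K T t = K * exp (- integral {t..T} \<rho>)"

definition Phi :: "(real \<Rightarrow> real) \<Rightarrow> real \<Rightarrow> real \<Rightarrow> real \<Rightarrow> real \<Rightarrow> real \<Rightarrow> real" where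
  "Phi \<rho> K T t L x = (if L > c_strike \<rho> K T t / x then 1 else 0)"

definition price_call :: "'a measure \<Rightarrow> (real \<Rightarrow> real) \<Rightarrow> (real \<Rightarrow> 'a \<Rightarrow> real) \<Rightarrow> real \<Rightarrow> real \<Rightarrow> real \<Rightarrow> real \<Rightarrow> real" where
  "price_call Q \<rho> S1 K T t x =
     x * (\<integral>\<omega>. Phi \<rho> K T t (dens_Q1' \<rho> S1 T t \<omega>) x \<partial>(Q1' Q \<rho> S1 T t))
     - exp (- integral {t..T} \<rho>) * K * (\<integral>\<omega>. Phi \<rho> K T t (dens_Q1' \<rho> S1 T t \<omega>) x \<partial>Q)"

end

theory Submission
  imports Defs
begin

lemma deriv_tail:
  fixes h :: "real \<Rightarrow> real"
  assumes hi: "integrable lborel h" and hc: "continuous_on {0<..} h" and a0: "a0 > 0"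
  shows "((\<lambda>a. \<integral>y. h y * (if y > a then 1 else 0) \<partial>lborel) has_real_derivative - h a0) (at a0)"
proof -
  define \<alpha> where "\<alpha> = a0 / 2"
  define \<beta> where "\<beta> = 2 * a0"
  have ab: "0 < \<alpha>" "\<alpha> < a0" "a0 < \<beta>" using a0 by (auto simp: \<alpha>_def \<beta>_def)
  have hm[measurable]: "h \<in> borel_measurable lborel" using hi by auto
  define C where "C = (\<integral>y. h y * (if y > \<beta> then 1 else 0) \<partial>lborel)"
  have hcab: "continuous_on {\<alpha>..\<beta>} h" by (rule continuous_on_subset[OF hc]) (use ab in auto)
  have eq: "(\<integral>y. h y * (if y > a then 1 else 0) \<partial>lborel) = integral {a..\<beta>} h + C"
    if a: "a \<in> {\<alpha><..<\<beta>}" for a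
  proof -
    have AE: "AE y in lborel. h y * (if y > a then 1 else 0) =
         indicator {a..\<beta>} y *\<^sub>R h y + h y * (if y > \<beta> then 1 else 0)"
      using AE_lborel_singleton[of a] proof eventually_elim
      case (elim y) then show ?case using a by (auto simp: indicator_def)
    qed
    have i1: "integrable lborel (\<lambda>y. indicator {a..\<beta>} y *\<^sub>R h y)"
      by (rule integrable_mult_indicator) (auto intro: hi)
    have i2: "integrable lborel (\<lambda>y. h y * (if y > \<beta> then 1 else 0))"
      by (rule Bochner_Integration.integrable_bound[OF hi]) auto
    have "(\<integral>y. h y * (if y > a then 1 else 0) \<partial>lborel) =
          (\<integral>y. indicator {a..\<beta>} y *\<^sub>R h y + h y * (if y > \<beta> then 1 else 0) \<partial>lborel)"
      by (rule integral_cong_AE) (use AE in auto)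
    also have "\<dots> = (\<integral>y. indicator {a..\<beta>} y *\<^sub>R h y \<partial>lborel) + C"
      unfolding C_def by (rule Bochner_Integration.integral_add[OF i1 i2])
    also have "(\<integral>y. indicator {a..\<beta>} y *\<^sub>R h y \<partial>lborel) = integral {a..\<beta>} h"
      using set_borel_integral_eq_integral(2)[of "{a..\<beta>}" h] i1
      by (simp add: set_integrable_def set_lebesgue_integral_def)
    finally show ?thesis .
  qed
  have "((\<lambda>a. integral {a..\<beta>} h + C) has_real_derivative - h a0) (at a0 within {\<alpha>..\<beta>})"
    using integral_has_real_derivative'[OF hcab, of a0] ab
    by (auto intro!: derivative_eq_intros)
  then have "((\<lambda>a. integral {a..\<beta>} h + C) has_real_derivative - h a0) (at a0)"
    using at_within_Icc_at[of \<alpha> a0 \<beta>] ab by simp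
  then show ?thesis
    by (rule has_field_derivative_transform_within_open[of _ _ _ "{\<alpha><..<\<beta>}"])
       (use ab eq in auto)
qed


lemma ratio_integrable:
  fixes Q :: "'a measure" and F :: "real \<Rightarrow> 'a measure" and X :: "real \<Rightarrow> 'a \<Rightarrow> real"
  assumes Q: "prob_space Q" and mart: "martingale_on Q F T X" and t: "t \<in> {0..T}"
    and pos: "\<forall>u\<in>{0..T}. \<forall>\<omega>\<in>space Q. X u \<omega> > 0"
  shows "integrable Q (\<lambda>\<omega>. X T \<omega> / X t \<omega>)"
proof -
  have T: "T \<in> {0..T}" using t by auto
  have sub: "subalgebra Q (F t)" and Xt[measurable]: "X t \<in> borel_measurable (F t)"
    using mart t unfolding martingale_on_def by auto
  have subT: "subalgebra Q (F T)" and XTF: "X T \<in> borel_measurable (F T)"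
    using mart T unfolding martingale_on_def by auto
  have XT[measurable]: "X T \<in> borel_measurable Q" by (rule measurable_from_subalg[OF subT XTF])
  have XtQ[measurable]: "X t \<in> borel_measurable Q" by (rule measurable_from_subalg[OF sub Xt])
  have ce: "AE \<omega> in Q. real_cond_exp Q (F t) (X T) \<omega> = X t \<omega>"
    using mart t unfolding martingale_on_def by auto
  interpret prob_space Q by (rule Q)
  interpret finite_measure_subalgebra Q "F t" by unfold_locales (rule sub)
  have "AE \<omega> in Q. nn_cond_exp Q (F t) (\<lambda>\<omega>. ennreal (- X T \<omega>)) \<omega> = nn_cond_exp Q (F t) (\<lambda>\<omega>. 0) \<omega>"
    by (rule nn_cond_exp_cong) (use pos T in \<open>auto intro!: AE_I2 ennreal_neg less_imp_le\<close>)
  moreover have "AE \<omega> in Q. 0 = nn_cond_exp Q (F t) (\<lambda>\<omega>. 0) \<omega>"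
    by (rule nn_cond_exp_F_meas) auto
  ultimately have nn: "AE \<omega> in Q. nn_cond_exp Q (F t) (\<lambda>\<omega>. ennreal (X T \<omega>)) \<omega> = ennreal (X t \<omega>)"
    using ce AE_space
  proof eventually_elim
    case (elim \<omega>)
    then have "enn2real (nn_cond_exp Q (F t) (\<lambda>\<omega>. ennreal (X T \<omega>)) \<omega>) = X t \<omega>"
      by (simp add: real_cond_exp_def)
    moreover have "X t \<omega> > 0" using pos t elim by auto
    ultimately show ?case
      by (cases "nn_cond_exp Q (F t) (\<lambda>\<omega>. ennreal (X T \<omega>)) \<omega>" rule: ennreal_cases) auto
  qed
  have "(\<integral>\<^sup>+\<omega>. ennreal (X T \<omega> / X t \<omega>) \<partial>Q) = (\<integral>\<^sup>+\<omega>. ennreal (1 / X t \<omega>) * ennreal (X T \<omega>) \<partial>Q)"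
    by (rule nn_integral_cong) (use pos t T in \<open>auto simp del: ennreal_1 simp: ennreal_mult[symmetric] less_imp_le\<close>)
  also have "\<dots> = (\<integral>\<^sup>+\<omega>. ennreal (1 / X t \<omega>) * nn_cond_exp Q (F t) (\<lambda>\<omega>. ennreal (X T \<omega>)) \<omega> \<partial>Q)"
    by (rule nn_cond_exp_intg[symmetric]) auto
  also have "\<dots> = (\<integral>\<^sup>+\<omega>. ennreal (1 / X t \<omega>) * ennreal (X t \<omega>) \<partial>Q)"
    by (rule nn_integral_cong_AE) (use nn in auto)
  also have "\<dots> = (\<integral>\<^sup>+\<omega>. 1 \<partial>Q)"
    by (rule nn_integral_cong) (use pos t in \<open>force simp del: ennreal_1 simp: ennreal_mult[symmetric] less_imp_le\<close>)
  also have "\<dots> < \<infinity>" by (simp add: emeasure_space_1)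
  finally show ?thesis
    by (intro integrableI_nonneg) (use pos t T in \<open>auto intro!: AE_I2 less_imp_le\<close>)
qed

theorem theorem1:
  fixes Q :: "'a measure" and F :: "real \<Rightarrow> 'a measure"
    and \<rho> :: "real \<Rightarrow> real" and S1 :: "real \<Rightarrow> 'a \<Rightarrow> real"
    and T K t s :: real
  assumes Q: "prob_space Q"
    and filt: "filtration (space Q) F"
    and T: "0 \<le> T"
    and rho: "\<rho> integrable_on {0..T}"
    and S1_pos: "\<forall>u\<in>{0..T}. \<forall>\<omega>\<in>space Q. S1 u \<omega> > 0"
    and mart: "martingale_on Q F T (discounted \<rho> S1)"
    and K: "K > 0"
    and t: "t \<in> {0..T}"
    and dens: "\<exists>f :: real \<Rightarrow> real. (\<forall>y. 0 \<le> f y) \<and> (\<forall>y \<le> 0. f y = 0) \<and>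
                  continuous_on {0<..} f \<and>
                  distributed Q lborel (dens_Q1' \<rho> S1 T t) (\<lambda>y. ennreal (f y))"
    and s: "s > 0"
  shows "((\<lambda>x. price_call Q \<rho> S1 K T t x) has_real_derivative
           (\<integral>\<omega>. Phi \<rho> K T t (dens_Q1' \<rho> S1 T t \<omega>) s \<partial>(Q1' Q \<rho> S1 T t))) (at s)"
  proof -
  interpret prob_space Q by (rule Q)
  define L where "L = dens_Q1' \<rho> S1 T t"
  define c where "c = c_strike \<rho> K T t"
  obtain f :: "real \<Rightarrow> real" where f0: "\<forall>y. 0 \<le> f y" and fz: "\<forall>y \<le> 0. f y = 0"
    and fc: "continuous_on {0<..} f" and D: "distributed Q lborel L (\<lambda>y. ennreal (f y))"
    using dens unfolding L_def by blast
  have cpos: "c > 0" using K by (simp add: c_def c_strike_def)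
  have ce: "exp (- integral {t..T} \<rho>) * K = c" by (simp add: c_def c_strike_def)
  have Lm[measurable]: "L \<in> borel_measurable Q"
    using distributed_measurable[OF D] by simp
  have Xpos: "\<forall>u\<in>{0..T}. \<forall>\<omega>\<in>space Q. discounted \<rho> S1 u \<omega> > 0"
    using S1_pos by (auto simp: discounted_def bond_def)
  have Lpos: "\<And>\<omega>. \<omega> \<in> space Q \<Longrightarrow> L \<omega> > 0"
    using Xpos t T by (auto simp: L_def dens_Q1'_def)
  have Li: "integrable Q L"
    using ratio_integrable[OF Q mart t Xpos] by (simp add: L_def dens_Q1'_def[abs_def])
  have i1: "integrable lborel (\<lambda>y. f y * y)"
    using distributed_integrable[OF D, of "\<lambda>y. y"] Li f0 by simp
  have i0: "integrable lborel f"
    using distributed_integrable[OF D, of "\<lambda>y. 1"] f0 by simp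
  have Phi_eq: "\<And>y x. Phi \<rho> K T t y x = (if y > c / x then 1 else 0)"
    by (simp add: Phi_def c_def)
  define G where "G = (\<lambda>a. \<integral>y. (f y * y) * (if y > a then 1 else 0) \<partial>lborel)"
  define P where "P = (\<lambda>a. \<integral>y. f y * (if y > a then 1 else 0) \<partial>lborel)"
  have EQ: "(\<integral>\<omega>. Phi \<rho> K T t (L \<omega>) x \<partial>Q) = P (c / x)" for x
    unfolding Phi_eq P_def
    by (rule distributed_integral[OF D, symmetric]) (use f0 in auto)
  have EQ1: "(\<integral>\<omega>. Phi \<rho> K T t (L \<omega>) x \<partial>(Q1' Q \<rho> S1 T t)) = G (c / x)" for x
  proof -
    have "(\<integral>\<omega>. Phi \<rho> K T t (L \<omega>) x \<partial>(Q1' Q \<rho> S1 T t))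
        = (\<integral>\<omega>. L \<omega> *\<^sub>R Phi \<rho> K T t (L \<omega>) x \<partial>Q)"
      unfolding Q1'_def L_def[symmetric] Phi_eq
      by (rule integral_density) (use Lpos in \<open>auto intro!: AE_I2 less_imp_le\<close>)
    also have "\<dots> = (\<integral>y. f y * (y * (if y > c / x then 1 else 0)) \<partial>lborel)"
      unfolding Phi_eq
      by (subst distributed_integral[OF D, symmetric]) (use f0 in auto)
    also have "\<dots> = G (c / x)" unfolding G_def by (simp add: mult.assoc)
    finally show ?thesis .
  qed
  have price: "(\<lambda>x. price_call Q \<rho> S1 K T t x) = (\<lambda>x. x * G (c / x) - c * P (c / x))"
    by (rule ext) (simp add: price_call_def L_def[symmetric] EQ EQ1 ce)
  define a0 where "a0 = c / s"
  have a0: "a0 > 0" using cpos s by (simp add: a0_def)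
  have fc1: "continuous_on {0<..} (\<lambda>y. f y * y)"
    by (intro continuous_intros fc)
  have dG: "(G has_real_derivative - (f a0 * a0)) (at a0)"
    unfolding G_def by (rule deriv_tail[OF i1 fc1 a0])
  have dP: "(P has_real_derivative - f a0) (at a0)"
    unfolding P_def by (rule deriv_tail[OF i0 fc a0])
  have dq: "((\<lambda>x. c / x) has_real_derivative - c / s^2) (at s)"
    using s by (auto intro!: derivative_eq_intros simp: power2_eq_square)
  have dG': "((\<lambda>x. G (c / x)) has_real_derivative - (f a0 * a0) * (- c / s^2)) (at s)"
    using DERIV_chain2[OF dG[unfolded a0_def] dq] by (simp add: a0_def)
  have dP': "((\<lambda>x. P (c / x)) has_real_derivative - f a0 * (- c / s^2)) (at s)"
    using DERIV_chain2[OF dP[unfolded a0_def] dq] by (simp add: a0_def)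
  have "((\<lambda>x. x * G (c / x) - c * P (c / x)) has_real_derivative
        (s * (- (f a0 * a0) * (- c / s^2)) + 1 * G (c / s) - c * (- f a0 * (- c / s^2)))) (at s)"
    by (rule DERIV_diff[OF DERIV_mult'[OF DERIV_ident dG'] DERIV_cmult[OF dP']])
  moreover have "s * (- (f a0 * a0) * (- c / s^2)) + 1 * G (c / s) - c * (- f a0 * (- c / s^2)) = G (c / s)"
    using s by (simp add: a0_def field_simps power2_eq_square)
  ultimately have "((\<lambda>x. x * G (c / x) - c * P (c / x)) has_real_derivative G (c / s)) (at s)"
    by (rule back_subst[where P="\<lambda>d. (_ has_real_derivative d) (at s)"])
  then show ?thesis
    unfolding price L_def[symmetric] EQ1 .
qed

end
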